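(* Let $\bar{\mathcal F}=\{\bar a^1,\bar b^1,\bar c^1,\bar d^1\}$ be the quadrangle of $Q$ with $\bar a^1=[1,0,0,0,0,0]$, $\bar b^1=[0,0,1,0,0,0]$, $\bar c^1=[0,1,0,0,0,0]$, $\bar d^1=[0,0,0,1,0,0]$ (so $\bar a^1\perp\bar b^1\perp\bar c^1\perp\bar d^1\perp\bar a^1$). Then $$I(\bar{\mathcal F})=\{[u,1/u,v,1/v,r,s]:\ u,v\in\mathbb F_q,\ uv\neq0,\ r,s\in\mathbb F_q,\ r^2+rs+\lambda s^2=1\},$$ and $|I(\bar{\mathcal F})|=(q-1)^2(q+1)$.
   Context: Let $q=2^n$, $V=V(6,q)$, and let $Q=Q^-(5,q)$ be the quadric of $\mathrm{PG}(V)$ with equation $f(x)=0$, where $f(x_1,\dots,x_6)=x_1x_2+x_3x_4+x_5^2+x_5x_6+\lambda x_6^2$ with $\lambda\in\mathbb F_q$, $\mathrm{Tr}(\lambda)=1$ ($\mathrm{Tr}$ the absolute trace $\mathbb F_q\to\mathbb F_2$). $Q$ is a generalized quadrangle of order $(q,q^2)$ whose lines are the totally singular lines. $\perp$ denotes orthogonality w.r.t. the bilinear form $\beta(x,y)=f(x+y)-f(x)-f(y)$; two distinct points of $Q$ are collinear in $Q$ iff they are orthogonal. A quadrangle of $Q$ is a set of four distinct points $a,b,c,d$ of $Q$ with $a\perp b\perp c\perp d\perp a$, $a\not\perp c$, $b\not\perp d$. For a point $p\notin Q$, a centric cube of $Q$ with center $p$ is a set of eight points $\{x_i^a: i=1,\dots,4,\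 a=1,2\}$ of $Q\setminus p^\perp$ such that $x_i^a$ and $x_j^b$ are collinear in $Q$ iff $i\neq j$ and $a\neq b$, and such that for each $i$ the points $p,x_i^1,x_i^2$ lie on a common projective line; the pairs $\{x_i^1,x_i^2\}$ are called opposite. A face of such a cube is a set of four of its points, one from each opposite pair, whose induced collinearity graph is a $4$-cycle. For a quadrangle $\mathcal F$ of $Q$, $I(\mathcal F)$ is the set of points $p\in\mathrm{PG}(V)\setminus Q$ with $p^\perp\cap\mathcal F=\emptyset$ such that $\mathcal F$ is a face of some centric cube of $Q$ with center $p$. *)

theory Defs
  imports Main
begin

text \<open>Vectors of V(6,q) are functions nat => 'a vanishing from index 6 on;
  coordinate i (0-based) is the (i+1)-th coordinate of the paper.\<close>

definition mk6 :: "'a::zero list \<Rightarrow> nat \<Rightarrow> 'a" where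
  "mk6 xs i = (if i < 6 then xs ! i else 0)"

definition vecs6 :: "(nat \<Rightarrow> 'a::zero) set" where
  "vecs6 = {x. \<forall>i\<ge>6. x i = 0}"

definition qf :: "'a::field \<Rightarrow> (nat \<Rightarrow> 'a) \<Rightarrow> 'a" where
  "qf lam x = x 0 * x 1 + x 2 * x 3 + x 4 ^ 2 + x 4 * x 5 + lam * x 5 ^ 2"

definition bf :: "'a::field \<Rightarrow> (nat \<Rightarrow> 'a) \<Rightarrow> (nat \<Rightarrow> 'a) \<Rightarrow> 'a" where
  "bf lam x y = qf lam (\<lambda>i. x i + y i) - qf lam x - qf lam y"

definition proj :: "(nat \<Rightarrow> 'a::field) \<Rightarrow> (nat \<Rightarrow> 'a) set" where
  "proj x = {(\<lambda>i. c * x i) | c. c \<noteq> 0}"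

definition points :: "(nat \<Rightarrow> 'a::field) set set" where
  "points = {proj x | x. x \<in> vecs6 \<and> x \<noteq> (\<lambda>_. 0)}"

definition onQ :: "'a::field \<Rightarrow> (nat \<Rightarrow> 'a) set \<Rightarrow> bool" where
  "onQ lam p \<longleftrightarrow> (\<forall>x\<in>p. qf lam x = 0)"

definition perp :: "'a::field \<Rightarrow> (nat \<Rightarrow> 'a) set \<Rightarrow> (nat \<Rightarrow> 'a) set \<Rightarrow> bool" where
  "perp lam p p' \<longleftrightarrow> (\<forall>x\<in>p. \<forall>y\<in>p'. bf lam x y = 0)"

definition quadrangle :: "'a::field \<Rightarrow> (nat \<Rightarrow> 'a) set \<Rightarrow> (nat \<Rightarrow> 'a) set
    \<Rightarrow> (nat \<Rightarrow> 'a) set \<Rightarrow> (nat \<Rightarrow> 'a) set \<Rightarrow> bool" where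
  "quadrangle lam a b c d \<longleftrightarrow>
     {a, b, c, d} \<subseteq> points \<and> distinct [a, b, c, d] \<and>
     onQ lam a \<and> onQ lam b \<and> onQ lam c \<and> onQ lam d \<and>
     perp lam a b \<and> perp lam b c \<and> perp lam c d \<and> perp lam d a \<and>
     \<not> perp lam a c \<and> \<not> perp lam b d"

definition proj_collinear3 :: "(nat \<Rightarrow> 'a::field) set \<Rightarrow> (nat \<Rightarrow> 'a) set \<Rightarrow> (nat \<Rightarrow> 'a) set \<Rightarrow> bool" where
  "proj_collinear3 p1 p2 p3 \<longleftrightarrow>
     (\<exists>u w. \<forall>z\<in>{p1, p2, p3}. \<exists>y\<in>z. \<exists>\<alpha> \<beta>. y = (\<lambda>i. \<alpha> * u i + \<beta> * w i))"

text \<open>X i a stands for the point x_i^a, i in {1..4}, a in {1,2}.\<close>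
definition centric_cube :: "'a::field \<Rightarrow> (nat \<Rightarrow> 'a) set \<Rightarrow> (nat \<Rightarrow> nat \<Rightarrow> (nat \<Rightarrow> 'a) set) \<Rightarrow> bool" where
  "centric_cube lam p X \<longleftrightarrow>
     p \<in> points \<and> \<not> onQ lam p \<and>
     (\<forall>i\<in>{1..4}. \<forall>a\<in>{1,2}. X i a \<in> points \<and> onQ lam (X i a) \<and> \<not> perp lam p (X i a)) \<and>
     inj_on (\<lambda>(i, a). X i a) ({1..4} \<times> {1,2}) \<and>
     (\<forall>i\<in>{1..4}. \<forall>a\<in>{1,2}. \<forall>j\<in>{1..4}. \<forall>b\<in>{1,2}. (i, a) \<noteq> (j, b) \<longrightarrow>
        (perp lam (X i a) (X j b) \<longleftrightarrow> i \<noteq> j \<and> a \<noteq> b)) \<and>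
     (\<forall>i\<in>{1..4}. proj_collinear3 p (X i 1) (X i 2))"

text \<open>A face: one point from each opposite pair, inducing a 4-cycle of collinearity,
  i.e. the four points form a quadrangle in some order.\<close>
definition cube_face :: "'a::field \<Rightarrow> (nat \<Rightarrow> nat \<Rightarrow> (nat \<Rightarrow> 'a) set) \<Rightarrow> (nat \<Rightarrow> 'a) set set \<Rightarrow> bool" where
  "cube_face lam X F \<longleftrightarrow>
     (\<exists>\<sigma>. (\<forall>i\<in>{1..4}. \<sigma> i \<in> {1,2}) \<and> F = (\<lambda>i. X i (\<sigma> i)) ` {1..4} \<and>
          (\<exists>a b c d. F = {a, b, c, d} \<and> quadrangle lam a b c d))"

definition I_set :: "'a::field \<Rightarrow> (nat \<Rightarrow> 'a) set set \<Rightarrow> (nat \<Rightarrow> 'a) set set" where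
  "I_set lam F = {p \<in> points. \<not> onQ lam p \<and> (\<forall>a\<in>F. \<not> perp lam p a) \<and>
                     (\<exists>X. centric_cube lam p X \<and> cube_face lam X F)}"

definition abs_trace :: "nat \<Rightarrow> 'a::field \<Rightarrow> 'a" where
  "abs_trace n x = (\<Sum>i<n. x ^ (2 ^ i))"

end

theory Submission
  imports Defs "HOL-Number_Theory.Number_Theory"
begin

lemma char2:
  assumes "card (UNIV::'a::{field,finite} set) = 2^n"
  shows "(2::'a) = 0"
proof -
  have pos: "CHAR('a) > 0" by (rule finite_imp_CHAR_pos) simp
  have pr: "prime CHAR('a)" using prime_CHAR_semidom[OF pos] .
  have "CHAR('a) dvd 2^n" using CHAR_dvd_CARD[where 'a='a] assms by simp
  hence "CHAR('a) dvd 2" using pr prime_dvd_power by blast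
  hence "CHAR('a) = 2" using pr
    using prime_nat_iff[of 2] prime_gt_1_nat[of "CHAR('a)"] by auto
  thus ?thesis using of_nat_CHAR[where 'a='a] by simp
qed

lemma mk6_simps[simp]:
  "mk6 [a,b,c,d,e,f] 0 = a" "mk6 [a,b,c,d,e,f] 1 = b" "mk6 [a,b,c,d,e,f] 2 = c"
  "mk6 [a,b,c,d,e,f] 3 = d" "mk6 [a,b,c,d,e,f] 4 = e" "mk6 [a,b,c,d,e,f] 5 = f"
  "mk6 [a,b,c,d,e,f] (Suc 0) = b"
  by (simp_all add: mk6_def)

lemma mk6_vecs[simp]: "mk6 xs \<in> vecs6"
  by (simp add: mk6_def vecs6_def)

lemma bf_eq: "bf lam x y = x 0 * y 1 + x 1 * y 0 + x 2 * y 3 + x 3 * y 2 + x 4 * y 5 + x 5 * y 4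
   + 2 * x 4 * y 4 + 2 * lam * x 5 * y 5"
  by (simp add: bf_def qf_def power2_eq_square algebra_simps)

lemma qf_scale: "qf lam (\<lambda>i. c * x i) = c^2 * qf lam x"
  by (simp add: qf_def power2_eq_square algebra_simps)

lemma bf_scale: "bf lam (\<lambda>i. c * x i) (\<lambda>i. d * y i) = c * d * bf lam x y"
  by (simp add: bf_eq algebra_simps)

lemma qf_lin: "qf lam (\<lambda>i. a * x i + b * y i) = a^2 * qf lam x + a * b * bf lam x y + b^2 * qf lam y"
  by (simp add: bf_def qf_def power2_eq_square algebra_simps)

lemma bf_self: "bf lam x x = 2 * qf lam x"
  by (simp add: bf_eq qf_def power2_eq_square algebra_simps)

lemma bf_sym: "bf lam x y = bf lam y x"
  by (simp add: bf_eq algebra_simps)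

lemma mem_proj: "y \<in> proj x \<longleftrightarrow> (\<exists>c. c \<noteq> 0 \<and> y = (\<lambda>i. c * x i))"
  by (auto simp: proj_def)

lemma self_proj: "x \<in> proj x"
  unfolding mem_proj by (rule exI[of _ 1]) simp

lemma onQ_proj: "onQ lam (proj x) \<longleftrightarrow> qf lam x = 0"
proof
  show "onQ lam (proj x) \<Longrightarrow> qf lam x = 0" using self_proj[of x] by (simp add: onQ_def)
qed (auto simp: onQ_def mem_proj qf_scale)

lemma perp_proj: "perp lam (proj x) (proj y) \<longleftrightarrow> bf lam x y = 0"
proof
  assume "perp lam (proj x) (proj y)"
  thus "bf lam x y = 0" using self_proj by (auto simp: perp_def)
qed (auto simp: perp_def mem_proj bf_scale)

lemma perp_sym: "perp lam p q \<longleftrightarrow> perp lam q p"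
  unfolding perp_def by (metis bf_sym)

lemma points_E:
  assumes "p \<in> points"
  obtains x where "x \<in> vecs6" "x \<noteq> (\<lambda>_. 0)" "p = proj x"
  using assms by (auto simp: points_def)

lemma points_nz: "p \<in> points \<Longrightarrow> z \<in> p \<Longrightarrow> z \<noteq> (\<lambda>_. 0)"
  by (auto simp: points_def mem_proj fun_eq_iff) (metis mult_eq_0_iff)

lemma proj_points: "x \<in> vecs6 \<Longrightarrow> x \<noteq> (\<lambda>_. 0) \<Longrightarrow> proj x \<in> points"
  by (auto simp: points_def)

lemma proj_eqI: "c \<noteq> 0 \<Longrightarrow> proj (\<lambda>i. c * x i) = proj x"
  apply (auto simp: proj_def)
   apply (metis mult.assoc no_zero_divisors)
  subgoal for d apply (rule exI[of _ "d / c"]) by auto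
  done

lemma proj_eqD: "proj x = proj y \<Longrightarrow> \<exists>c. c \<noteq> 0 \<and> y = (\<lambda>i. c * x i)"
proof -
  assume "proj x = proj y"
  hence "y \<in> proj x" using self_proj[of y] by simp
  thus ?thesis by (simp add: mem_proj)
qed

lemma self_perp: "p \<in> points \<Longrightarrow> onQ lam p \<Longrightarrow> perp lam p p"
  by (auto elim!: points_E simp: onQ_proj perp_proj bf_self)


lemma span_id: "(a1 * b2 - a2 * b1) * (a3 * u + b3 * w) =
      (a3 * b2 - b3 * a2) * (a1 * u + b1 * w) +
      (b3 * a1 - a3 * b1) * (a2 * u + b2 * (w::'a::field))"
  by (simp add: algebra_simps)

lemma span2:
  fixes x e z u w :: "nat \<Rightarrow> 'a::field"
  assumes hx: "x = (\<lambda>i. a1*u i + b1*w i)" and he: "e = (\<lambda>i. a2*u i + b2*w i)"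
    and hz: "z = (\<lambda>i. a3*u i + b3*w i)"
    and q: "qf lam x \<noteq> 0" "qf lam e = 0" and nz: "e \<noteq> (\<lambda>_. 0)"
  shows "\<exists>\<alpha> \<beta>. z = (\<lambda>i. \<alpha> * x i + \<beta> * e i)"
proof -
  define D where "D = a1*b2 - a2*b1"
  have D: "D \<noteq> 0"
  proof
    assume D0: "D = 0"
    have e1: "b2 * x i = b1 * e i" for i using D0 unfolding hx he D_def
      by (simp add: algebra_simps)
    have e2: "a2 * x i = a1 * e i" for i using D0 unfolding hx he D_def
      by (simp add: algebra_simps)
    show False
    proof (cases "b2 = 0")
      case False
      have "x = (\<lambda>i. (b1/b2) * e i)" using e1 False by (auto simp: fun_eq_iff field_simps)
      hence "qf lam x = (b1/b2)^2 * qf lam e" using qf_scale by metis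
      thus False using q by simp
    next
      case b2: True
      show False
      proof (cases "a2 = 0")
        case False
        have "x = (\<lambda>i. (a1/a2) * e i)" using e2 False by (auto simp: fun_eq_iff field_simps)
        hence "qf lam x = (a1/a2)^2 * qf lam e" using qf_scale by metis
        thus False using q by simp
      next
        case True
        thus False using b2 nz he by auto
      qed
    qed
  qed
  have key: "D * z i = (a3*b2 - b3*a2) * x i + (b3*a1 - a3*b1) * e i" for i
    unfolding hx he hz D_def by (rule span_id)
  show ?thesis
  proof (intro exI)
    show "z = (\<lambda>i. ((a3*b2 - b3*a2)/D) * x i + ((b3*a1 - a3*b1)/D) * e i)"
    proof
      fix i
      have "z i = (D * z i) / D" using D by simp
      also have "\<dots> = ((a3*b2 - b3*a2)/D) * x i + ((b3*a1 - a3*b1)/D) * e i"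
        unfolding key by (simp add: add_divide_distrib)
      finally show "z i = ((a3*b2 - b3*a2)/D) * x i + ((b3*a1 - a3*b1)/D) * e i" .
    qed
  qed
qed


lemma line_lemma:
  assumes p: "p = proj x" and qx: "qf lam x \<noteq> 0" and R: "R = proj e" and enz: "e \<noteq> (\<lambda>_. 0)"
    and qe: "qf lam e = 0" and g: "g \<in> points" "onQ lam g" and pg: "perp lam (proj f) g"
    and col: "proj_collinear3 p R g"
  shows "\<exists>z \<alpha> \<beta>. z \<noteq> (\<lambda>_. 0) \<and> qf lam z = 0 \<and> bf lam f z = 0 \<and> z = (\<lambda>i. \<alpha> * x i + \<beta> * e i)"
proof -
  obtain u w where uw: "\<forall>Z\<in>{p, R, g}. \<exists>y\<in>Z. \<exists>\<alpha> \<beta>. y = (\<lambda>i. \<alpha> * u i + \<beta> * w i)"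
    using col unfolding proj_collinear3_def by blast
  have uw3: "\<exists>y\<in>p. \<exists>\<alpha> \<beta>. y = (\<lambda>i. \<alpha> * u i + \<beta> * w i)"
     "\<exists>y\<in>R. \<exists>\<alpha> \<beta>. y = (\<lambda>i. \<alpha> * u i + \<beta> * w i)"
     "\<exists>y\<in>g. \<exists>\<alpha> \<beta>. y = (\<lambda>i. \<alpha> * u i + \<beta> * w i)"
    using uw by simp_all
  obtain x' a1 b1 where x': "x' \<in> p" "x' = (\<lambda>i. a1 * u i + b1 * w i)" using uw3(1) by blast
  obtain e' a2 b2 where e': "e' \<in> R" "e' = (\<lambda>i. a2 * u i + b2 * w i)" using uw3(2) by blast
  obtain z a3 b3 where z: "z \<in> g" "z = (\<lambda>i. a3 * u i + b3 * w i)" using uw3(3) by blast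
  obtain c where c: "c \<noteq> 0" "x' = (\<lambda>i. c * x i)" using x'(1) unfolding p mem_proj by blast
  obtain d where d: "d \<noteq> 0" "e' = (\<lambda>i. d * e i)" using e'(1) unfolding R mem_proj by blast
  have "qf lam x' = c^2 * qf lam x" using c(2) qf_scale[of lam c x] by simp
  hence qx': "qf lam x' \<noteq> 0" using c(1) qx by simp
  have "qf lam e' = d^2 * qf lam e" using d(2) qf_scale[of lam d e] by simp
  hence qe': "qf lam e' = 0" using qe by simp
  have e'nz: "e' \<noteq> (\<lambda>_. 0)" using d enz by (auto simp: fun_eq_iff)
  obtain \<alpha> \<beta> where ab: "z = (\<lambda>i. \<alpha> * x' i + \<beta> * e' i)"
    using span2[OF x'(2) e'(2) z(2) qx' qe' e'nz] by blast
  have 1: "z = (\<lambda>i. (\<alpha>*c) * x i + (\<beta>*d) * e i)" using ab c d by (simp add: fun_eq_iff)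
  have 2: "z \<noteq> (\<lambda>_. 0)" using points_nz g(1) z(1) by blast
  have 3: "qf lam z = 0" using g(2) z(1) by (simp add: onQ_def)
  have 4: "bf lam f z = 0" using pg z(1) self_proj[of f] by (simp add: perp_def)
  show ?thesis using 1 2 3 4 by blast
qed

lemma face_pair:
  assumes cc: "centric_cube lam p X" and cf: "cube_face lam X F"
    and P: "P \<in> F" and R: "R \<in> F" and np: "\<not> perp lam P R"
  shows "\<exists>g. g \<in> points \<and> onQ lam g \<and> perp lam P g \<and> proj_collinear3 p R g"
proof -
  obtain \<sigma> where s: "\<forall>i\<in>{1..4}. \<sigma> i \<in> {1,2}" and F: "F = (\<lambda>i. X i (\<sigma> i)) ` {1..4::nat}"
    using cf unfolding cube_face_def by blast
  obtain i where i: "i \<in> {1..4}" "P = X i (\<sigma> i)" using P F by blast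
  obtain j where j: "j \<in> {1..4}" "R = X j (\<sigma> j)" using R F by blast
  have pts: "\<forall>i\<in>{1..4}. \<forall>a\<in>{1,2}. X i a \<in> points \<and> onQ lam (X i a) \<and> \<not> perp lam p (X i a)"
    and iff: "\<forall>i\<in>{1..4}. \<forall>a\<in>{1,2}. \<forall>j\<in>{1..4}. \<forall>b\<in>{1,2}. (i, a) \<noteq> (j, b) \<longrightarrow>
        (perp lam (X i a) (X j b) \<longleftrightarrow> i \<noteq> j \<and> a \<noteq> b)"
    and col: "\<forall>i\<in>{1..4}. proj_collinear3 p (X i 1) (X i 2)"
    using cc unfolding centric_cube_def by blast+
  have ij: "i \<noteq> j"
  proof
    assume "i = j"
    hence "P = R" using i j by simp
    thus False using np self_perp pts i s by metis
  qed
  have si: "\<sigma> i \<in> {1,2}" using s i by blast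
  have sj0: "\<sigma> j \<in> {1,2}" using s j by blast
  have sij: "\<sigma> i = \<sigma> j" using iff[rule_format, OF i(1) si j(1) sj0] ij np i(2) j(2) by auto
  define b where "b = 3 - \<sigma> j"
  have sj: "\<sigma> j \<in> {1,2}" using s j by blast
  have b: "b \<in> {1,2}" "b \<noteq> \<sigma> j" using sj by (auto simp: b_def)
  have g: "X j b \<in> points" "onQ lam (X j b)" using pts j b by auto
  have pg: "perp lam P (X j b)" using iff[rule_format, OF i(1) si j(1) b(1)] ij b(2) sij i(2) by auto
  have seq: "{p, X j 1, X j 2} = {p, R, X j b}"
  proof (cases "\<sigma> j = 1")
    case True
    hence "R = X j 1" "b = 2" using j(2) by (simp_all add: b_def)
    thus ?thesis by simp
  next
    case False
    hence "\<sigma> j = 2" using sj by simp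
    hence "R = X j 2" "b = 1" using j(2) by (simp_all add: b_def)
    thus ?thesis by (simp add: insert_commute)
  qed
  have "proj_collinear3 p (X j 1) (X j 2)" using col j(1) by blast
  hence "proj_collinear3 p R (X j b)" unfolding proj_collinear3_def seq .
  thus ?thesis using g pg by blast
qed


lemma cube_inj:
  assumes sp: "\<forall>i\<in>{1..4}. \<forall>a\<in>{1,2}. perp lam (X i a) (X i a)"
   and iff: "\<forall>i\<in>{1..4::nat}. \<forall>a\<in>{1,2::nat}. \<forall>j\<in>{1..4}. \<forall>b\<in>{1,2}. (i,a)\<noteq>(j,b) \<longrightarrow>
        (perp lam (X i a) (X j b) \<longleftrightarrow> i\<noteq>j \<and> a\<noteq>b)"
  shows "inj_on (\<lambda>(i,a). X i a) ({1..4}\<times>{1,2})"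
proof (rule inj_onI, clarify)
  fix i a j b assume h: "i \<in> {1..4::nat}" "a \<in> {1,2::nat}" "j \<in> {1..4}" "b \<in> {1,2}"
    "X i a = X j b"
  show "i = j \<and> a = b"
  proof (rule ccontr)
    assume ne: "\<not> (i = j \<and> a = b)"
    show False
    proof (cases "i \<noteq> j \<and> a \<noteq> b")
      case False
      hence "\<not> perp lam (X i a) (X j b)" using iff[rule_format, OF h(1) h(2) h(3) h(4)] ne by blast
      moreover have "perp lam (X i a) (X i a)" using sp h(1) h(2) by blast
      ultimately show False using h(5) by simp
    next
      case True
      obtain k where k: "k \<in> {1..4::nat}" "k \<noteq> i" "k \<noteq> j"
      proof -
        have "\<exists>k\<in>{1..4::nat}. k \<noteq> i \<and> k \<noteq> j"
        proof (cases "i \<noteq> 1 \<and> j \<noteq> 1")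
          case True then show ?thesis by (intro bexI[of _ 1]) auto
        next
          case F1: False
          show ?thesis
          proof (cases "i \<noteq> 2 \<and> j \<noteq> 2")
            case True then show ?thesis by (intro bexI[of _ 2]) auto
          next
            case False then show ?thesis using F1 by (intro bexI[of _ 3]) auto
          qed
        qed
        thus ?thesis using that by blast
      qed
      have "\<not> perp lam (X k a) (X i a)" using iff[rule_format, OF k(1) h(2) h(1) h(2)] k(2) by auto
      moreover have "perp lam (X k a) (X j b)" using iff[rule_format, OF k(1) h(2) h(3) h(4)] k(3) True by auto
      ultimately show False using h by simp
    qed
  qed
qed




lemma bf_lin: "bf lam f (\<lambda>i. a * x i + b * y i) = a * bf lam f x + b * bf lam f y"
  by (simp add: bf_eq algebra_simps)

lemma pair_eq:
  assumes z: "z \<noteq> (\<lambda>_. 0)" "qf lam z = 0" "bf lam f z = 0" "z = (\<lambda>i. \<alpha>*x i + \<beta>*e i)"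
    and h: "bf lam f e = 1" "bf lam f x = t" "qf lam e = 0" "bf lam x e = s"
  shows "qf lam x = t * s"
proof -
  have e1: "bf lam f z = \<alpha> * t + \<beta>" unfolding z(4) bf_lin h(1) h(2) by simp
  have 1: "\<alpha> * t + \<beta> = 0" using z(3) unfolding e1 .
  have e2: "qf lam z = \<alpha>^2 * qf lam x + \<alpha> * \<beta> * s" unfolding z(4) qf_lin h(3) h(4) by simp
  have 2: "\<alpha>^2 * qf lam x + \<alpha> * \<beta> * s = 0" using z(2) unfolding e2 .
  have b: "\<beta> = - \<alpha> * t" using 1 by (simp add: eq_neg_iff_add_eq_0 add.commute)
  have a: "\<alpha> \<noteq> 0"
  proof
    assume "\<alpha> = 0"
    hence "\<beta> = 0" using b by simp
    thus False using z(1,4) \<open>\<alpha> = 0\<close> by simp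
  qed
  have "\<alpha>^2 * (qf lam x - t * s) = 0" using 2 unfolding b by (simp add: algebra_simps power2_eq_square)
  thus ?thesis using a by simp
qed

lemma ch2_self: "(2::'a::ring_1) = 0 \<Longrightarrow> x + x = (0::'a)"
  by (metis mult_2 mult_zero_left)

lemma ch2_neg: "(2::'a::ring_1) = 0 \<Longrightarrow> - x = (x::'a)"
  by (metis ch2_self add_eq_0_iff2 neg_eq_iff_add_eq_0)

lemma sq_surj:
  assumes ch: "(2::'a::{field,finite}) = 0"
  shows "\<exists>c. c^2 = (a::'a)"
proof -
  have "inj (\<lambda>x::'a. x^2)"
  proof (rule injI)
    fix x y :: 'a assume "x^2 = y^2"
    hence "(x + y)^2 = x^2 + x^2 + 2*x*y" by (simp add: power2_eq_square algebra_simps)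
    also have "\<dots> = 0" using ch ch2_self[OF ch, of "x^2"] by simp
    finally have "x + y = 0" by simp
    hence "x = - y" by (simp add: eq_neg_iff_add_eq_0)
    thus "x = y" using ch2_neg[OF ch] by simp
  qed
  hence "surj (\<lambda>x::'a. x^2)" using finite_UNIV_inj_surj[of "\<lambda>x::'a. x^2"] by simp
  thus ?thesis by (metis surjD)
qed

lemma ch2_cancel:
  assumes "(2::'a::ring_1) = 0" "Q = a + b + N" "a = Q" "b = Q"
  shows "N = (Q::'a)"
proof -
  have "Q = (Q + Q) + N" using assms(2-4) by simp
  thus ?thesis using ch2_self[OF assms(1), of Q] by simp
qed

lemma vec6_eq:
  assumes "x \<in> vecs6" "y \<in> vecs6" "\<And>i. i < 6 \<Longrightarrow> x i = y i"
  shows "x = y"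
proof
  fix i show "x i = y i" using assms by (cases "i < 6") (auto simp: vecs6_def)
qed

lemma fwd:
  fixes lam :: "'a::{field,finite}"
  assumes ch: "(2::'a) = 0"
    and pI: "p \<in> I_set lam {proj (mk6 [1,0,0,0,0,0]), proj (mk6 [0,0,1,0,0,0]),
                    proj (mk6 [0,1,0,0,0,0]), proj (mk6 [0,0,0,1,0,0])}"
  shows "\<exists>u v r s. p = proj (mk6 [u, 1 / u, v, 1 / v, r, s]) \<and>
                u * v \<noteq> 0 \<and> r ^ 2 + r * s + lam * s ^ 2 = 1"
proof -
  define E0 where "E0 = mk6 [1,0,0,0,0,0::'a]"
  define E1 where "E1 = mk6 [0,1,0,0,0,0::'a]"
  define E2 where "E2 = mk6 [0,0,1,0,0,0::'a]"
  define E3 where "E3 = mk6 [0,0,0,1,0,0::'a]"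
  define Fb where "Fb = {proj E0, proj E2, proj E1, proj E3}"
  have pI': "p \<in> I_set lam Fb" using pI unfolding Fb_def E0_def E1_def E2_def E3_def .
  have pp: "p \<in> points" and nq: "\<not> onQ lam p" and np: "\<forall>a\<in>Fb. \<not> perp lam p a"
    and cX: "\<exists>X. centric_cube lam p X \<and> cube_face lam X Fb"
    using pI' unfolding I_set_def by blast+
  obtain X where cc: "centric_cube lam p X" and cf: "cube_face lam X Fb" using cX by blast
  obtain x where x: "x \<in> vecs6" "x \<noteq> (\<lambda>_. 0)" "p = proj x" using pp by (rule points_E)
  have qx: "qf lam x \<noteq> 0" using nq x(3) onQ_proj by metis
  have "\<not> perp lam p (proj E0)" using np by (simp add: Fb_def)
  hence x1: "x 1 \<noteq> 0" unfolding x(3) perp_proj by (simp add: bf_eq E0_def)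
  have "\<not> perp lam p (proj E1)" using np by (simp add: Fb_def)
  hence x0: "x 0 \<noteq> 0" unfolding x(3) perp_proj by (simp add: bf_eq E1_def)
  have "\<not> perp lam p (proj E2)" using np by (simp add: Fb_def)
  hence x3: "x 3 \<noteq> 0" unfolding x(3) perp_proj by (simp add: bf_eq E2_def)
  have "\<not> perp lam p (proj E3)" using np by (simp add: Fb_def)
  hence x2: "x 2 \<noteq> 0" unfolding x(3) perp_proj by (simp add: bf_eq E3_def)
  have E1nz: "E1 \<noteq> (\<lambda>_. 0)" unfolding E1_def by (metis mk6_simps(2) one_neq_zero)
  have E3nz: "E3 \<noteq> (\<lambda>_. 0)" unfolding E3_def by (metis mk6_simps(4) one_neq_zero)
  have "\<not> perp lam (proj E0) (proj E1)" unfolding perp_proj by (simp add: bf_eq E0_def E1_def)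
  then obtain g where g: "g \<in> points" "onQ lam g" "perp lam (proj E0) g" "proj_collinear3 p (proj E1) g"
    using face_pair[OF cc cf, of "proj E0" "proj E1"] by (auto simp: Fb_def)
  obtain z \<alpha> \<beta> where z: "z \<noteq> (\<lambda>_. 0)" "qf lam z = 0" "bf lam E0 z = 0" "z = (\<lambda>i. \<alpha> * x i + \<beta> * E1 i)"
    using line_lemma[OF x(3) qx refl E1nz _ g] by (auto simp: qf_def E1_def)
  have q1: "qf lam x = x 1 * x 0"
    by (rule pair_eq[OF z]) (simp_all add: bf_eq qf_def E0_def E1_def)
  have "\<not> perp lam (proj E2) (proj E3)" unfolding perp_proj by (simp add: bf_eq E2_def E3_def)
  then obtain g' where g': "g' \<in> points" "onQ lam g'" "perp lam (proj E2) g'" "proj_collinear3 p (proj E3) g'"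
    using face_pair[OF cc cf, of "proj E2" "proj E3"] by (auto simp: Fb_def)
  obtain z' \<alpha>' \<beta>' where z': "z' \<noteq> (\<lambda>_. 0)" "qf lam z' = 0" "bf lam E2 z' = 0" "z' = (\<lambda>i. \<alpha>' * x i + \<beta>' * E3 i)"
    using line_lemma[OF x(3) qx refl E3nz _ g'] by (auto simp: qf_def E3_def)
  have q2: "qf lam x = x 3 * x 2"
    by (rule pair_eq[OF z']) (simp_all add: bf_eq qf_def E2_def E3_def)
  have N: "x 4 ^ 2 + x 4 * x 5 + lam * x 5 ^ 2 = qf lam x"
    by (rule ch2_cancel[OF ch, of _ "x 0 * x 1" "x 2 * x 3"])
       (use q1 q2 in \<open>simp_all add: qf_def mult.commute\<close>)
  obtain c where c: "c^2 = 1 / (x 0 * x 1)" using sq_surj[OF ch] by blast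
  have cnz: "c \<noteq> 0" using c x0 x1 by auto
  have c01: "c^2 * (x 0 * x 1) = 1" using c x0 x1 by simp
  have c23: "c^2 * (x 2 * x 3) = 1" using c01 q1 q2 by (simp add: mult.commute)
  define y where "y = (\<lambda>i. c * x i)"
  have py: "p = proj y" unfolding y_def x(3) using proj_eqI[OF cnz] by simp
  have yeq: "y = mk6 [c * x 0, 1 / (c * x 0), c * x 2, 1 / (c * x 2), c * x 4, c * x 5]"
  proof (rule vec6_eq)
    show "y \<in> vecs6" using x(1) by (simp add: y_def vecs6_def)
    show "mk6 [c * x 0, 1 / (c * x 0), c * x 2, 1 / (c * x 2), c * x 4, c * x 5] \<in> vecs6" by simp
    fix i :: nat assume "i < 6"
    hence "i = 0 \<or> i = 1 \<or> i = 2 \<or> i = 3 \<or> i = 4 \<or> i = 5" by auto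
    thus "y i = mk6 [c * x 0, 1 / (c * x 0), c * x 2, 1 / (c * x 2), c * x 4, c * x 5] i"
      using c01 c23 cnz x0 x2 unfolding y_def
      by (auto simp: field_simps power2_eq_square)
  qed
  have uv: "c * x 0 * (c * x 2) \<noteq> 0" using cnz x0 x2 by simp
  have rs: "(c * x 4)^2 + (c * x 4) * (c * x 5) + lam * (c * x 5)^2 = 1"
  proof -
    have "(c * x 4)^2 + (c * x 4) * (c * x 5) + lam * (c * x 5)^2 = c^2 * (x 4 ^ 2 + x 4 * x 5 + lam * x 5 ^ 2)"
      by (simp add: power2_eq_square algebra_simps)
    also have "\<dots> = 1" unfolding N q1 using c01 by (simp add: mult.commute)
    finally show ?thesis .
  qed
  have pe: "p = proj (mk6 [c * x 0, 1 / (c * x 0), c * x 2, 1 / (c * x 2), c * x 4, c * x 5])"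
    using py yeq by simp
  show ?thesis
    by (rule exI[of _ "c * x 0"], rule exI[of _ "c * x 2"], rule exI[of _ "c * x 4"],
        rule exI[of _ "c * x 5"]) (use pe uv rs in blast)
qed


lemma bf2: "(2::'a::field) = 0 \<Longrightarrow> bf (lam::'a) x y = x 0 * y 1 + x 1 * y 0 + x 2 * y 3 + x 3 * y 2 + x 4 * y 5 + x 5 * y 4"
  by (simp add: bf_eq)

lemma ch2_self2: "(2::'a::ring_1) = 0 \<Longrightarrow> x + (x + y) = (y::'a)"
  by (metis add.assoc add_0 ch2_self)

lemma qf_mk6: "qf lam (mk6 [a,b,c,d,e,f]) = a*b + c*d + (e^2 + e*f + lam*f^2)"
  by (simp add: qf_def add.assoc)

lemma mk6_nz: "a \<noteq> 0 \<or> b \<noteq> 0 \<or> c \<noteq> 0 \<or> d \<noteq> 0 \<Longrightarrow> mk6 [a,b,c,d,e,f] \<noteq> (\<lambda>_. 0)"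
  by (metis mk6_simps(1-4))

lemma mk6_comb:
  fixes \<alpha> \<beta> :: "'a::field"
  assumes "a1 = \<alpha>*a2 + \<beta>*a3" "b1 = \<alpha>*b2 + \<beta>*b3" "c1 = \<alpha>*c2 + \<beta>*c3" "d1 = \<alpha>*d2 + \<beta>*d3"
    "e1 = \<alpha>*e2 + \<beta>*e3" "f1 = \<alpha>*f2 + \<beta>*f3"
  shows "mk6 [a1,b1,c1,d1,e1,f1] = (\<lambda>i. \<alpha> * mk6 [a2,b2,c2,d2,e2,f2] i + \<beta> * mk6 [a3,b3,c3,d3,e3,f3] i)"
proof (rule vec6_eq)
  show "(\<lambda>i. \<alpha> * mk6 [a2,b2,c2,d2,e2,f2] i + \<beta> * mk6 [a3,b3,c3,d3,e3,f3] i) \<in> vecs6"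
    by (simp add: vecs6_def mk6_def)
  fix i :: nat assume "i < 6"
  hence "i = 0 \<or> i = 1 \<or> i = 2 \<or> i = 3 \<or> i = 4 \<or> i = 5" by auto
  thus "mk6 [a1,b1,c1,d1,e1,f1] i = \<alpha> * mk6 [a2,b2,c2,d2,e2,f2] i + \<beta> * mk6 [a3,b3,c3,d3,e3,f3] i"
    using assms by auto
qed simp

lemma coll_intro:
  assumes "y1 = (\<lambda>i. ka*u i + la*w i)" "y2 = (\<lambda>i. kb*u i + lb*w i)" "y3 = (\<lambda>i. kc*u i + lc*w i)"
  shows "proj_collinear3 (proj y1) (proj y2) (proj y3)"
  unfolding proj_collinear3_def using assms self_proj by blast

lemma proj_neq: "x k = 0 \<Longrightarrow> y k \<noteq> 0 \<Longrightarrow> proj x \<noteq> proj y"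
proof
  assume "x k = 0" "y k \<noteq> 0" "proj x = proj y"
  then obtain c where "y = (\<lambda>i. c * x i)" using proj_eqD by blast
  thus False using \<open>x k = 0\<close> \<open>y k \<noteq> 0\<close> by simp
qed

lemma set14: "{1..4::nat} = {1,2,3,4}" by auto

lemma ball14: "(\<forall>i\<in>{1..4::nat}. P i) \<longleftrightarrow> P 1 \<and> P 2 \<and> P 3 \<and> P 4"
  unfolding set14 by simp


lemma bwd:
  fixes lam u v r s :: "'a::field"
  assumes ch: "(2::'a) = 0" and uv: "u * v \<noteq> 0" and N: "r ^ 2 + r * s + lam * s ^ 2 = 1"
  shows "proj (mk6 [u, 1 / u, v, 1 / v, r, s]) \<in> I_set lam {proj (mk6 [1,0,0,0,0,0]), proj (mk6 [0,0,1,0,0,0]),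
                    proj (mk6 [0,1,0,0,0,0]), proj (mk6 [0,0,0,1,0,0])}"
proof -
  have u: "u \<noteq> 0" and v: "v \<noteq> 0" using uv by auto
  define E0 where "E0 = mk6 [1,0,0,0,0,0::'a]"
  define E1 where "E1 = mk6 [0,1,0,0,0,0::'a]"
  define E2 where "E2 = mk6 [0,0,1,0,0,0::'a]"
  define E3 where "E3 = mk6 [0,0,0,1,0,0::'a]"
  define y where "y = mk6 [u, 1 / u, v, 1 / v, r, s]"
  define Y0 where "Y0 = mk6 [0, 1 / u, v, 1 / v, r, s]"
  define Y1 where "Y1 = mk6 [u, 0, v, 1 / v, r, s]"
  define Y2 where "Y2 = mk6 [u, 1 / u, 0, 1 / v, r, s]"
  define Y3 where "Y3 = mk6 [u, 1 / u, v, 0, r, s]"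
  define V :: "nat \<Rightarrow> nat \<Rightarrow> nat \<Rightarrow> 'a" where "V = (\<lambda>i a. if i = 1 then (if a = 1 then E0 else Y0)
      else if i = 2 then (if a = 1 then E1 else Y1)
      else if i = 3 then (if a = 1 then Y2 else E2) else (if a = 1 then Y3 else E3))"
  define X :: "nat \<Rightarrow> nat \<Rightarrow> (nat \<Rightarrow> 'a) set" where "X = (\<lambda>i a. proj (V i a))"
  define p where "p = proj y"
  note defs = E0_def E1_def E2_def E3_def y_def Y0_def Y1_def Y2_def Y3_def
  note bsimps = bf2[OF ch] ch2_self[OF ch] ch2_self2[OF ch] add_ac mult_ac
  have pp: "p \<in> points" unfolding p_def y_def by (rule proj_points) (auto intro!: mk6_nz simp: u)
  have nq: "\<not> onQ lam p" unfolding p_def onQ_proj y_def qf_mk6 N using u v ch by simp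
  have Vpts: "\<forall>i\<in>{1..4}. \<forall>a\<in>{1,2}. X i a \<in> points"
    unfolding ball14 X_def V_def defs using u v
    by (auto intro!: proj_points mk6_nz)
  have VQ: "\<forall>i\<in>{1..4}. \<forall>a\<in>{1,2}. onQ lam (X i a)"
    unfolding ball14 X_def V_def defs onQ_proj using u v ch by (simp add: qf_mk6 N)
  have Vnp: "\<forall>i\<in>{1..4}. \<forall>a\<in>{1,2}. \<not> perp lam p (X i a)"
    unfolding ball14 X_def V_def p_def defs perp_proj using u v by (simp add: bsimps)
  have iff: "\<forall>i\<in>{1..4}. \<forall>a\<in>{1,2}. \<forall>j\<in>{1..4}. \<forall>b\<in>{1,2}. (i, a) \<noteq> (j, b) \<longrightarrow>
        (perp lam (X i a) (X j b) \<longleftrightarrow> i \<noteq> j \<and> a \<noteq> b)"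
    unfolding ball14 X_def V_def defs perp_proj using u v by (simp add: bsimps)
  have inj: "inj_on (\<lambda>(i, a). X i a) ({1..4} \<times> {1,2})"
    by (rule cube_inj[OF _ iff]) (use Vpts VQ self_perp in blast)
  have c1: "proj_collinear3 p (proj E0) (proj Y0)" unfolding p_def
    by (rule coll_intro[where u=y and w=E0 and ka=1 and la=0 and kb=0 and lb=1 and kc=1 and lc="-u"];
        unfold defs; rule mk6_comb; simp add: u)
  have c2: "proj_collinear3 p (proj E1) (proj Y1)" unfolding p_def
    by (rule coll_intro[where u=y and w=E1 and ka=1 and la=0 and kb=0 and lb=1 and kc=1 and lc="-(1/u)"];
        unfold defs; rule mk6_comb; simp add: u)
  have c3: "proj_collinear3 p (proj Y2) (proj E2)" unfolding p_def
    by (rule coll_intro[where u=y and w=E2 and ka=1 and la=0 and kc=0 and lc=1 and kb=1 and lb="-v"];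
        unfold defs; rule mk6_comb; simp add: v)
  have c4: "proj_collinear3 p (proj Y3) (proj E3)" unfolding p_def
    by (rule coll_intro[where u=y and w=E3 and ka=1 and la=0 and kc=0 and lc=1 and kb=1 and lb="-(1/v)"];
        unfold defs; rule mk6_comb; simp add: v)
  have col: "\<forall>i\<in>{1..4}. proj_collinear3 p (X i 1) (X i 2)"
    unfolding ball14 X_def V_def using c1 c2 c3 c4 by simp
  have cc: "centric_cube lam p X"
    unfolding centric_cube_def using pp nq Vpts VQ Vnp inj iff col by blast
  define \<sigma> where "\<sigma> = (\<lambda>i::nat. if i \<le> 2 then 1 else (2::nat))"
  have img: "(\<lambda>i. X i (\<sigma> i)) ` {1..4} = {proj E0, proj E2, proj E1, proj E3}"
    unfolding set14 by (simp add: X_def V_def \<sigma>_def insert_commute)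
  have d1: "proj E0 \<noteq> proj E2" by (rule proj_neq[of _ 2]) (simp_all add: defs)
  have d2: "proj E0 \<noteq> proj E1" by (rule proj_neq[of _ 1]) (simp_all add: defs)
  have d3: "proj E0 \<noteq> proj E3" by (rule proj_neq[of _ 3]) (simp_all add: defs)
  have d4: "proj E2 \<noteq> proj E1" by (rule proj_neq[of _ 1]) (simp_all add: defs)
  have d5: "proj E2 \<noteq> proj E3" by (rule proj_neq[of _ 3]) (simp_all add: defs)
  have d6: "proj E1 \<noteq> proj E3" by (rule proj_neq[of _ 3]) (simp_all add: defs)
  have Ep: "proj E0 \<in> points" "proj E1 \<in> points" "proj E2 \<in> points" "proj E3 \<in> points"
    unfolding defs by (auto intro!: proj_points mk6_nz)
  have quad: "quadrangle lam (proj E0) (proj E2) (proj E1) (proj E3)"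
    unfolding quadrangle_def using d1 d2 d3 d4 d5 d6 Ep
    by (simp add: onQ_proj perp_proj qf_mk6 bf2[OF ch] defs)
  have cf: "cube_face lam X {proj E0, proj E2, proj E1, proj E3}"
    unfolding cube_face_def
    by (rule exI[of _ \<sigma>]) (use img quad in \<open>auto simp: \<sigma>_def\<close>)
  have np: "\<forall>a\<in>{proj E0, proj E2, proj E1, proj E3}. \<not> perp lam p a"
    unfolding p_def defs using u v by (simp add: perp_proj bsimps)
  have "p \<in> I_set lam {proj E0, proj E2, proj E1, proj E3}"
    unfolding I_set_def using pp nq np cc cf by blast
  thus ?thesis unfolding p_def y_def E0_def E1_def E2_def E3_def .
qed


lemma sq_inj:
  assumes ch: "(2::'a::field) = 0" and "x^2 = (y::'a)^2"
  shows "x = y"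
proof -
  have "(x + y)^2 = x^2 + x^2 + 2*x*y" using assms(2) by (simp add: power2_eq_square algebra_simps)
  also have "\<dots> = 0" using ch ch2_self[OF ch, of "x^2"] by simp
  finally have "x + y = 0" by simp
  hence "x = - y" by (simp add: eq_neg_iff_add_eq_0)
  thus "x = y" using ch2_neg[OF ch] by simp
qed

lemma ch2_diff: "(2::'a::ring_1) = 0 \<Longrightarrow> x - y = x + (y::'a)"
  by (metis ch2_neg diff_conv_add_uminus)

lemma fermat:
  fixes t :: "'a::{field,finite}"
  shows "t ^ card (UNIV::'a set) = t"
proof (cases "t = 0")
  case True
  have "card (UNIV::'a set) > 0" by (simp add: card_gt_0_iff)
  thus ?thesis using True by (simp add: power_0_left)
next
  case False
  define U where "U = (UNIV::'a set) - {0}"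
  have fin: "finite U" by (simp add: U_def)
  have inj: "inj_on (\<lambda>x. t * x) U" using False by (auto intro: inj_onI)
  have img: "(\<lambda>x. t * x) ` U = U"
  proof
    show "(\<lambda>x. t * x) ` U \<subseteq> U" using False by (auto simp: U_def)
    show "U \<subseteq> (\<lambda>x. t * x) ` U"
    proof
      fix y assume "y \<in> U"
      hence "y = t * (y / t)" "y / t \<in> U" using False by (auto simp: U_def)
      thus "y \<in> (\<lambda>x. t * x) ` U" by blast
    qed
  qed
  have "prod id U = prod id ((\<lambda>x. t * x) ` U)" using img by simp
  also have "\<dots> = prod (\<lambda>x. t * x) U" using prod.reindex[OF inj, of id] by simp
  also have "\<dots> = t ^ card U * prod id U" by (simp add: prod.distrib)
  finally have eq: "prod id U = t ^ card U * prod id U" .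
  have "prod id U \<noteq> 0" using fin by (simp add: U_def)
  hence t1: "t ^ card U = 1" using eq by simp
  have cU: "card U = card (UNIV::'a set) - 1" by (simp add: U_def card_Diff_singleton)
  have pos: "card (UNIV::'a set) > 0" by (simp add: card_gt_0_iff)
  have "t ^ card (UNIV::'a set) = t ^ card U * t" using cU pos
    by (metis Suc_diff_1 power_Suc2)
  thus ?thesis using t1 by simp
qed

lemma frob_add:
  assumes ch: "(2::'a::field) = 0"
  shows "(a + b :: 'a) ^ (2 ^ i) = a ^ (2 ^ i) + b ^ (2 ^ i)"
proof (induction i)
  case 0 then show ?case by simp
next
  case (Suc i)
  have "(a + b) ^ (2 ^ Suc i) = ((a + b) ^ (2 ^ i))^2" by (simp add: power_mult[symmetric] mult.commute)
  also have "\<dots> = (a ^ (2 ^ i) + b ^ (2 ^ i))^2" using Suc by simp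
  also have "\<dots> = (a ^ (2 ^ i))^2 + (b ^ (2 ^ i))^2 + 2 * a ^ (2 ^ i) * b ^ (2 ^ i)"
    by (simp add: power2_eq_square algebra_simps)
  also have "\<dots> = a ^ (2 ^ Suc i) + b ^ (2 ^ Suc i)" using ch
    by (simp add: power_mult[symmetric] mult.commute)
  finally show ?case .
qed

lemma trace_nz:
  fixes lam :: "'a::{field,finite}"
  assumes ch: "(2::'a) = 0" and q: "card (UNIV :: 'a set) = 2 ^ n" and tr: "abs_trace n lam = 1"
  shows "t^2 + t + lam \<noteq> 0"
proof
  assume "t^2 + t + lam = 0"
  hence l: "lam = t^2 + t" using ch2_neg[OF ch]
    by (metis add.commute add_eq_0_iff2 neg_eq_iff_add_eq_0)
  define f where "f = (\<lambda>i::nat. t ^ (2 ^ i))"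
  have "abs_trace n lam = (\<Sum>i<n. f (Suc i) - f i)"
    unfolding abs_trace_def l f_def
  proof (rule sum.cong[OF refl])
    fix i
    have "(t\<^sup>2 + t) ^ 2 ^ i = (t^2) ^ (2^i) + t ^ (2 ^ i)" by (rule frob_add[OF ch])
    also have "(t^2) ^ (2^i) = t ^ 2 ^ Suc i" by (simp only: power_mult[symmetric] power_Suc)
    finally show "(t\<^sup>2 + t) ^ 2 ^ i = t ^ 2 ^ Suc i - t ^ 2 ^ i"
      unfolding ch2_diff[OF ch] .
  qed
  also have "\<dots> = f n - f 0" by (rule sum_lessThan_telescope)
  also have "f n = t" unfolding f_def q[symmetric] by (rule fermat)
  finally have "abs_trace n lam = 0" by (simp add: f_def)
  thus False using tr by simp
qed


lemma N_scale: "(t*s)^2 + (t*s)*s + lam*s^2 = s^2 * (t^2 + t + (lam::'a::field))"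
  by (simp add: power2_eq_square algebra_simps)

lemma cardR:
  fixes lam :: "'a::{field,finite}"
  assumes ch: "(2::'a) = 0" and q: "card (UNIV :: 'a set) = 2 ^ n" and tr: "abs_trace n lam = 1"
  shows "card {(r,s). r^2 + r*s + lam*s^2 = (1::'a)} = card (UNIV::'a set) + 1"
proof -
  define R where "R = {(r,s). r^2 + r*s + lam*s^2 = (1::'a)}"
  define R' where "R' = {(r,s). s \<noteq> 0 \<and> r^2 + r*s + lam*s^2 = (1::'a)}"
  have Req: "R = insert (1,0) R'"
  proof (rule Set.set_eqI)
    fix x :: "'a \<times> 'a"
    obtain r s where x: "x = (r,s)" by fastforce
    show "x \<in> R \<longleftrightarrow> x \<in> insert (1,0) R'"
    proof (cases "s = 0")
      case True
      have "r^2 = 1 \<longleftrightarrow> r = 1"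
      proof
        assume "r^2 = 1" hence "r^2 = 1^2" by simp
        thus "r = 1" by (rule sq_inj[OF ch])
      qed simp
      thus ?thesis using True by (simp add: R_def R'_def x)
    next
      case False
      thus ?thesis by (simp add: R_def R'_def x)
    qed
  qed
  have nin: "(1,0) \<notin> R'" by (simp add: R'_def)
  have bij: "bij_betw (\<lambda>(r,s). r / s) R' UNIV"
  proof (rule bij_betw_imageI)
    show "inj_on (\<lambda>(r,s). r / s) R'"
    proof (rule inj_onI, clarify)
      fix r s r' s' assume h: "(r,s) \<in> R'" "(r',s') \<in> R'" "r / s = r' / s'"
      define t where "t = r / s"
      have s: "s \<noteq> 0" "s' \<noteq> 0" using h by (auto simp: R'_def)
      have r1: "r = t * s" using s by (simp add: t_def)
      have r2: "r' = t * s'" unfolding t_def h(3) using s by simp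
      note r = r1 r2
      have D: "t^2 + t + lam \<noteq> 0" by (rule trace_nz[OF ch q tr])
      have "s^2 * (t^2 + t + lam) = 1" using h(1) r(1) N_scale[of t s lam] by (simp add: R'_def)
      moreover have "s'^2 * (t^2 + t + lam) = 1" using h(2) r(2) N_scale[of t s' lam] by (simp add: R'_def)
      ultimately have "s^2 = s'^2" using D by (metis mult_right_cancel)
      hence "s = s'" by (rule sq_inj[OF ch])
      thus "r = r' \<and> s = s'" using r by simp
    qed
    show "(\<lambda>(r,s). r / s) ` R' = UNIV"
    proof (rule Set.set_eqI, rule iffI)
      fix t :: 'a assume "t \<in> UNIV"
      have D: "t^2 + t + lam \<noteq> 0" by (rule trace_nz[OF ch q tr])
      obtain s where s: "s^2 = 1 / (t^2 + t + lam)" using sq_surj[OF ch] by blast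
      have snz: "s \<noteq> 0" using s D by auto
      have "(t*s, s) \<in> R'" using s D snz N_scale[of t s lam] by (simp add: R'_def)
      moreover have "t = (\<lambda>(r,s). r / s) (t*s, s)" using snz by simp
      ultimately show "t \<in> (\<lambda>(r,s). r / s) ` R'" by blast
    qed simp
  qed
  have "card R' = card (UNIV::'a set)" using bij_betw_same_card[OF bij] .
  moreover have "finite R'" by simp
  ultimately have "card R = card (UNIV::'a set) + 1" unfolding Req using nin by simp
  thus ?thesis unfolding R_def .
qed


lemma phi_inj:
  fixes lam :: "'a::field"
  assumes ch: "(2::'a) = 0"
  shows "inj_on (\<lambda>(u,v,r,s). proj (mk6 [u, 1 / u, v, 1 / v, r, s]))
           {(u,v,r,s). u * v \<noteq> 0 \<and> r ^ 2 + r * s + lam * s ^ 2 = (1::'a)}"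
proof (rule inj_onI)
  fix a b assume ha: "a \<in> {(u,v,r,s). u * v \<noteq> 0 \<and> r ^ 2 + r * s + lam * s ^ 2 = (1::'a)}"
    and hb: "b \<in> {(u,v,r,s). u * v \<noteq> 0 \<and> r ^ 2 + r * s + lam * s ^ 2 = (1::'a)}"
    and hab: "(\<lambda>(u,v,r,s). proj (mk6 [u, 1 / u, v, 1 / v, r, s])) a = (\<lambda>(u,v,r,s). proj (mk6 [u, 1 / u, v, 1 / v, r, s])) b"
  obtain u v r s where a: "a = (u,v,r,s)" by (cases a) blast
  obtain u' v' r' s' where b: "b = (u',v',r',s')" by (cases b) blast
  have h: "u * v \<noteq> 0" "r ^ 2 + r * s + lam * s ^ 2 = 1" "u' * v' \<noteq> 0"
    "r' ^ 2 + r' * s' + lam * s' ^ 2 = 1"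
    "proj (mk6 [u, 1 / u, v, 1 / v, r, s]) = proj (mk6 [u', 1 / u', v', 1 / v', r', s'])"
    using ha hb hab unfolding a b by auto
  obtain c where c: "c \<noteq> 0" "mk6 [u', 1 / u', v', 1 / v', r', s'] = (\<lambda>i. c * mk6 [u, 1 / u, v, 1 / v, r, s] i)"
    using proj_eqD[OF h(5)] by blast
  have q1: "qf lam (mk6 [u, 1 / u, v, 1 / v, r, s]) = 1"
    unfolding qf_mk6 h(2) using h(1) ch by simp
  have q2: "qf lam (mk6 [u', 1 / u', v', 1 / v', r', s']) = 1"
    unfolding qf_mk6 h(4) using h(3) ch by simp
  have "c^2 = 1" using q2 unfolding c(2) qf_scale q1 by simp
  hence "c^2 = 1^2" by simp
  hence c1: "c = 1" by (rule sq_inj[OF ch])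
  have e: "mk6 [u', 1 / u', v', 1 / v', r', s'] = mk6 [u, 1 / u, v, 1 / v, r, s]"
    using c(2) c1 by simp
  have "u' = u" using fun_cong[OF e, of 0] by simp
  moreover have "v' = v" using fun_cong[OF e, of 2] by simp
  moreover have "r' = r" using fun_cong[OF e, of 4] by simp
  moreover have "s' = s" using fun_cong[OF e, of 5] by simp
  ultimately show "a = b" unfolding a b by simp
qed

theorem lemma3p6:
  fixes lam :: "'a::{field, finite}" and n :: nat
  assumes "card (UNIV :: 'a set) = 2 ^ n"
    and "abs_trace n lam = 1"
  shows "I_set lam {proj (mk6 [1,0,0,0,0,0]), proj (mk6 [0,0,1,0,0,0]),
                    proj (mk6 [0,1,0,0,0,0]), proj (mk6 [0,0,0,1,0,0])}
           = {proj (mk6 [u, 1 / u, v, 1 / v, r, s]) | u v r s.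
                u * v \<noteq> 0 \<and> r ^ 2 + r * s + lam * s ^ 2 = 1}
       \<and> card (I_set lam {proj (mk6 [1,0,0,0,0,0]), proj (mk6 [0,0,1,0,0,0]),
                    proj (mk6 [0,1,0,0,0,0]), proj (mk6 [0,0,0,1,0,0])})
           = (card (UNIV :: 'a set) - 1) ^ 2 * (card (UNIV :: 'a set) + 1)"
proof -
  have ch: "(2::'a) = 0" using char2[OF assms(1)] .
  define S where "S = {proj (mk6 [u, 1 / u, v, 1 / v, r, s]) | u v r s.
                u * v \<noteq> 0 \<and> r ^ 2 + r * s + lam * s ^ 2 = 1}"
  define I where "I = I_set lam {proj (mk6 [1,0,0,0,0,0]), proj (mk6 [0,0,1,0,0,0]),
                    proj (mk6 [0,1,0,0,0,0]), proj (mk6 [0,0,0,1,0,0])}"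
  have seq: "I = S"
  proof (rule Set.set_eqI, rule iffI)
    fix p assume "p \<in> I"
    thus "p \<in> S" unfolding I_def S_def using fwd[OF ch] by blast
  next
    fix p assume "p \<in> S"
    then obtain u v r s where "p = proj (mk6 [u, 1 / u, v, 1 / v, r, s])" "u * v \<noteq> 0"
      "r ^ 2 + r * s + lam * s ^ 2 = 1" unfolding S_def by blast
    thus "p \<in> I" unfolding I_def using bwd[OF ch] by blast
  qed
  define T :: "('a \<times> 'a \<times> 'a \<times> 'a) set" where "T = {(u,v,r,s). u * v \<noteq> 0 \<and> r ^ 2 + r * s + lam * s ^ 2 = (1::'a)}"
  define \<phi> :: "'a \<times> 'a \<times> 'a \<times> 'a \<Rightarrow> (nat \<Rightarrow> 'a) set" where "\<phi> = (\<lambda>(u,v,r,s). proj (mk6 [u, 1 / u, v, 1 / v, r, s]))"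
  have SI: "S = \<phi> ` T" unfolding S_def T_def \<phi>_def by (auto simp: image_def)
  have inj: "inj_on \<phi> T" unfolding \<phi>_def T_def by (rule phi_inj[OF ch])
  define R :: "('a \<times> 'a) set" where "R = {(r,s). r^2 + r*s + lam*s^2 = (1::'a)}"
  have TR: "T = (UNIV - {0}) \<times> ((UNIV - {0}) \<times> R)" unfolding T_def R_def by auto
  have cR: "card R = card (UNIV::'a set) + 1" unfolding R_def by (rule cardR[OF ch assms])
  have c0: "card (UNIV - {0::'a}) = card (UNIV::'a set) - 1" by (simp add: card_Diff_singleton)
  have "card T = (card (UNIV::'a set) - 1) * ((card (UNIV::'a set) - 1) * (card (UNIV::'a set) + 1))"
    unfolding TR card_cartesian_product c0 cR ..
  hence "card I = (card (UNIV :: 'a set) - 1) ^ 2 * (card (UNIV :: 'a set) + 1)"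
    unfolding seq SI card_image[OF inj] by (simp only: power2_eq_square mult.assoc)
  thus ?thesis using seq unfolding I_def S_def by simp
qed


end
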